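(* Let $n\ge2$, let $F:\mathbf{R}^n\to\mathbf{R}$ be an integrand and let $O_F:=\mathrm{Hypo}(\mathcal{I}\circ\mathcal{D}(F))$. Then $\mathfrak{P}O_F=K_F$ and $\mathfrak{P}K_F=O_F$. In particular, $O_F$ is a compact convex set containing $0$ in its interior.
   Context: $\mathbb{S}^{n-1}$ is the unit sphere. An integrand is a lower semicontinuous $F:\mathbf{R}^n\to\mathbf{R}$ with $F(\lambda x)=\lambda F(x)$ for $\lambda\ge0$ and $F>0$ on $\mathbb{S}^{n-1}$. $K_F:=\bigcap_{v\in\mathbb{S}^{n-1}}\{z:\langle z,v\rangle\le F(v)\}$. For $\Omega\subseteq\mathbf{R}^n$, $\mathfrak{P}\Omega:=\{z:\langle z,x\rangle\le1\ \forall x\in\Omega\}$. Operators on integrands (defined on $\mathbb{S}^{n-1}$ and extended by 1-homogeneity): $\mathcal{W}(F)(v):=\inf_{w\in\mathbb{S}^{n-1},\langle v,w\rangle>0}F(w)/\langle v,w\rangle$, $\mathcal{A}(G)(v):=\sup_{w\in\mathbb{S}^{n-1}}G(w)\langle v,w\rangle$, $\mathcal{I}(G)(v):=1/G(v)$, and $\mathcal{D}(F):=\mathcal{A}(\mathcal{W}(F))$. For an integrand $G$, its polar hypograph is $\mathrm{Hypo}(G):=\{\lambda G(v)v: v\in\mathbb{S}^{n-1},\ 0\le\lambda\le1\}$. *)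

theory Defs
  imports "HOL-Analysis.Analysis"
begin

definition lower_semicont :: "('a::topological_space \<Rightarrow> real) \<Rightarrow> bool" where
  "lower_semicont F \<longleftrightarrow> (\<forall>x t. t < F x \<longrightarrow> (\<forall>\<^sub>F y in at x. t < F y))"

definition integrand :: "('a::euclidean_space \<Rightarrow> real) \<Rightarrow> bool" where
  "integrand F \<longleftrightarrow> lower_semicont F
     \<and> (\<forall>x (c::real). c \<ge> 0 \<longrightarrow> F (c *\<^sub>R x) = c * F x)
     \<and> (\<forall>v \<in> sphere 0 1. F v > 0)"

definition hom_ext :: "('a::real_normed_vector \<Rightarrow> real) \<Rightarrow> 'a \<Rightarrow> real" where
  "hom_ext f x = (if x = 0 then 0 else norm x * f (x /\<^sub>R norm x))"

definition opW :: "('a::euclidean_space \<Rightarrow> real) \<Rightarrow> 'a \<Rightarrow> real" where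
  "opW F = hom_ext (\<lambda>v. INF w \<in> {w \<in> sphere 0 1. inner v w > 0}. F w / inner v w)"

definition opA :: "('a::euclidean_space \<Rightarrow> real) \<Rightarrow> 'a \<Rightarrow> real" where
  "opA G = hom_ext (\<lambda>v. SUP w \<in> sphere 0 1. G w * inner v w)"

definition opI :: "('a::euclidean_space \<Rightarrow> real) \<Rightarrow> 'a \<Rightarrow> real" where
  "opI G = hom_ext (\<lambda>v. 1 / G v)"

definition opD :: "('a::euclidean_space \<Rightarrow> real) \<Rightarrow> 'a \<Rightarrow> real" where
  "opD F = opA (opW F)"

definition K_of :: "('a::euclidean_space \<Rightarrow> real) \<Rightarrow> 'a set" where
  "K_of F = (\<Inter>v \<in> sphere 0 1. {z. inner z v \<le> F v})"

definition polar :: "'a::euclidean_space set \<Rightarrow> 'a set" where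
  "polar \<Omega> = {z. \<forall>x \<in> \<Omega>. inner z x \<le> 1}"

definition Hypo :: "('a::euclidean_space \<Rightarrow> real) \<Rightarrow> 'a set" where
  "Hypo G = {(t * G v) *\<^sub>R v | v t. v \<in> sphere 0 1 \<and> 0 \<le> t \<and> t \<le> 1}"

end

theory Submission
  imports Defs
begin

lemma lsc_pos:
  fixes F :: "'a::euclidean_space \<Rightarrow> real"
  assumes "lower_semicont F" "\<forall>v\<in>sphere 0 1. F v > 0"
  shows "\<exists>r>0. \<forall>v\<in>sphere 0 1. r \<le> F v"
proof -
  have "\<forall>x\<in>sphere (0::'a) 1. \<exists>U. open U \<and> x \<in> U \<and> (\<forall>y\<in>U. F x / 2 < F y)"
  proof
    fix x :: 'a assume x: "x \<in> sphere 0 1"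
    have "F x / 2 < F x" using assms(2) x by auto
    then have "\<forall>\<^sub>F y in at x. F x / 2 < F y" using assms(1) unfolding lower_semicont_def by blast
    then obtain U where U: "open U" "x \<in> U" "\<forall>y\<in>U. y \<noteq> x \<longrightarrow> F x / 2 < F y"
      unfolding eventually_at_topological by blast
    show "\<exists>U. open U \<and> x \<in> U \<and> (\<forall>y\<in>U. F x / 2 < F y)"
      using U \<open>F x / 2 < F x\<close> by (intro exI[of _ U]) auto
  qed
  then obtain U where U: "\<And>x. x \<in> sphere (0::'a) 1 \<Longrightarrow> open (U x) \<and> x \<in> U x \<and> (\<forall>y\<in>U x. F x / 2 < F y)"
    by metis
  obtain D where D: "D \<subseteq> sphere 0 1" "finite D" "sphere 0 1 \<subseteq> (\<Union>x\<in>D. U x)"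
    by (rule compactE_image[OF compact_sphere, of "sphere 0 1" U]) (use U in auto)
  define r where "r = Min (insert 1 ((\<lambda>x. F x / 2) ` D))"
  have "r > 0" unfolding r_def using D assms(2) by (subst Min_gr_iff) auto
  moreover have "r \<le> F v" if v: "v \<in> sphere 0 1" for v
  proof -
    obtain x where x: "x \<in> D" "v \<in> U x" using D v by auto
    have "r \<le> F x / 2" unfolding r_def using D x by (intro Min_le) auto
    also have "\<dots> < F v" using U[of x] x D by auto
    finally show ?thesis by simp
  qed
  ultimately show ?thesis by blast
qed

lemma bipolar:
  fixes K :: "'a::euclidean_space set"
  assumes "closed K" "convex K" "0 \<in> K"
  shows "polar (polar K) = K"
proof
  show "K \<subseteq> polar (polar K)" unfolding polar_def by (auto simp: inner_commute)
  show "polar (polar K) \<subseteq> K"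
  proof
    fix z assume z: "z \<in> polar (polar K)"
    show "z \<in> K"
    proof (rule ccontr)
      assume "z \<notin> K"
      then obtain a b where ab: "inner a z < b" "\<forall>x\<in>K. inner a x > b"
        using separating_hyperplane_closed_point[OF assms(2,1)] by blast
      have b: "b < 0" using ab(2) assms(3) by force
      have "a /\<^sub>R b \<in> polar K" unfolding polar_def
      proof safe
        fix x assume "x \<in> K"
        then have "inner a x > b" using ab by auto
        then show "inner (a /\<^sub>R b) x \<le> 1" using b by (simp add: divide_simps)
      qed
      then have "inner z (a /\<^sub>R b) \<le> 1" using z unfolding polar_def by blast
      then have "inner a z / b \<le> 1" by (simp add: inner_commute divide_inverse mult.commute)
      then show False using ab(1) b by (simp add: divide_simps)
    qed
  qed
qed

lemma hom_ext_unit: "norm v = 1 \<Longrightarrow> hom_ext f v = f v"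
  unfolding hom_ext_def by auto


theorem lemma3p1:
  fixes F :: "'a::euclidean_space \<Rightarrow> real"
  assumes "DIM('a) \<ge> 2"
    and "integrand F"
  defines "O_F \<equiv> Hypo (opI (opD F))"
  shows "polar O_F = K_of F \<and> polar (K_of F) = O_F
         \<and> compact O_F \<and> convex O_F \<and> 0 \<in> interior O_F"
proof -
  define S where "S = sphere (0::'a) 1"
  define K where "K = K_of F"
  have Fpos: "\<And>v. v \<in> S \<Longrightarrow> F v > 0" using assms(2) unfolding integrand_def S_def by auto
  obtain r where r: "r > 0" "\<And>v. v \<in> S \<Longrightarrow> r \<le> F v"
    using lsc_pos[of F] assms(2) unfolding integrand_def S_def by auto
  have Kmem: "z \<in> K \<longleftrightarrow> (\<forall>v\<in>S. inner z v \<le> F v)" for z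
    unfolding K_def K_of_def S_def by auto
  have Pmem: "z \<in> polar K \<longleftrightarrow> (\<forall>x\<in>K. inner z x \<le> 1)" for z
    unfolding polar_def by auto
  have SnormI: "x /\<^sub>R norm x \<in> S" if "x \<noteq> 0" for x using that unfolding S_def by auto
  have Snorm: "norm v = 1" if "v \<in> S" for v using that unfolding S_def by auto
  have inner_le1: "inner v w \<le> 1" if "v \<in> S" "w \<in> S" for v w
    using norm_cauchy_schwarz[of v w] Snorm[OF that(1)] Snorm[OF that(2)] by simp
  define R where "R = (\<Sum>b\<in>Basis. F b + F (- b))"
  have Basis_S: "b \<in> S" "- b \<in> S" if "b \<in> Basis" for b using that unfolding S_def by auto
  have Kbound: "norm z \<le> R" if "z \<in> K" for z
  proof -
    have "norm z \<le> (\<Sum>b\<in>Basis. \<bar>inner z b\<bar>)" by (rule norm_le_l1)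
    also have "\<dots> \<le> R" unfolding R_def
    proof (rule sum_mono)
      fix b :: 'a assume b: "b \<in> Basis"
      have "inner z b \<le> F b" "inner z (-b) \<le> F (-b)" using that Basis_S[OF b] Kmem by auto
      moreover have "F b > 0" "F (-b) > 0" using Fpos Basis_S[OF b] by auto
      ultimately show "\<bar>inner z b\<bar> \<le> F b + F (- b)" by auto
    qed
    finally show ?thesis .
  qed
  have Kr: "z \<in> K" if "norm z \<le> r" for z
    unfolding Kmem
  proof
    fix v assume v: "v \<in> S"
    have "inner z v \<le> norm z * norm v" using norm_cauchy_schwarz[of z v] by simp
    also have "\<dots> \<le> r" using that Snorm[OF v] by simp
    finally show "inner z v \<le> F v" using r(2)[OF v] by simp
  qed
  have R: "R \<ge> r" using Kbound[of "r *\<^sub>R (SOME b. b \<in> Basis)"] Kr[of "r *\<^sub>R (SOME b. b \<in> Basis)"] r(1)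
    by (simp add: someI_ex[OF ex_in_conv[THEN iffD2, OF nonempty_Basis]])
  have K0: "0 \<in> K" using Kr r by simp
  have Kclosed: "closed K" unfolding K_def K_of_def
    by (intro closed_INT) (simp add: closed_halfspace_le inner_commute[of _ "v" for v] closed_Collect_le continuous_intros)
  have Kconvex: "convex K" unfolding K_def K_of_def
    by (intro convex_INT) (simp add: convex_halfspace_le inner_commute)
  define Wf where "Wf v = (INF w \<in> {w \<in> S. inner v w > 0}. F w / inner v w)" for v
  have Wset_ne: "{w \<in> S. inner v w > 0} \<noteq> {}" if "v \<in> S" for v
    using that Snorm[OF that] by (intro ex_in_conv[THEN iffD1] exI[of _ v]) (simp add: power2_norm_eq_inner[symmetric])
  have Wbdd: "bdd_below ((\<lambda>w. F w / inner v w) ` {w \<in> S. inner v w > 0})" for v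
    by (rule bdd_belowI[of _ 0]) (use Fpos in \<open>auto intro!: divide_nonneg_pos less_imp_le\<close>)
  have radial: "l *\<^sub>R v \<in> K \<longleftrightarrow> l \<le> Wf v" if v: "v \<in> S" and l: "l \<ge> 0" for v l
  proof
    assume "l *\<^sub>R v \<in> K"
    then have h: "l * inner v w \<le> F w" if "w \<in> S" for w using Kmem that by auto
    show "l \<le> Wf v" unfolding Wf_def
      by (rule cINF_greatest[OF Wset_ne[OF v]]) (use h in \<open>auto simp: pos_le_divide_eq\<close>)
  next
    assume lw: "l \<le> Wf v"
    show "l *\<^sub>R v \<in> K" unfolding Kmem
    proof
      fix w assume w: "w \<in> S"
      show "inner (l *\<^sub>R v) w \<le> F w"
      proof (cases "inner v w > 0")
        case True
        have "Wf v \<le> F w / inner v w" unfolding Wf_def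
          by (rule cINF_lower[OF Wbdd]) (use w True in auto)
        then show ?thesis using lw True by (simp add: pos_le_divide_eq) (meson mult_right_mono less_imp_le order_trans)
      next
        case False
        then have "l * inner v w \<le> 0" using l by (simp add: mult_nonneg_nonpos)
        then show ?thesis using Fpos[OF w] by simp
      qed
    qed
  qed
  have Wr: "r \<le> Wf v" if "v \<in> S" for v
    using radial[OF that, of r] Kr[of "r *\<^sub>R v"] r Snorm[OF that] by simp
  have Wnn: "0 \<le> Wf v" if "v \<in> S" for v using Wr[OF that] r by simp
  have WK: "Wf v *\<^sub>R v \<in> K" if "v \<in> S" for v using radial[OF that Wnn[OF that]] by simp
  have WR: "Wf v \<le> R" if "v \<in> S" for v using Kbound[OF WK[OF that]] Snorm[OF that] Wnn[OF that] by simp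
  define h where "h v = (SUP w \<in> S. Wf w * inner v w)" for v
  have Sne: "S \<noteq> {}" using Basis_S nonempty_Basis by blast
  have hbdd: "bdd_above ((\<lambda>w. Wf w * inner v w) ` S)" if v: "v \<in> S" for v
  proof (rule bdd_aboveI[of _ R])
    fix x assume "x \<in> (\<lambda>w. Wf w * inner v w) ` S"
    then obtain w where w: "w \<in> S" "x = Wf w * inner v w" by auto
    have "Wf w * inner v w \<le> Wf w * 1" by (rule mult_left_mono) (use inner_le1[OF v w(1)] Wnn[OF w(1)] in auto)
    then show "x \<le> R" using w WR[OF w(1)] by simp
  qed
  have hpos: "h v > 0" if v: "v \<in> S" for v
  proof -
    have "Wf v * inner v v \<le> h v" unfolding h_def by (rule cSUP_upper[OF v hbdd[OF v]])
    then show ?thesis using Wr[OF v] r Snorm[OF v] by (simp add: power2_norm_eq_inner[symmetric])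
  qed
  have key: "(\<forall>z\<in>K. inner (t *\<^sub>R v) z \<le> 1) \<longleftrightarrow> t * h v \<le> 1" if v: "v \<in> S" and t: "t \<ge> 0" for v t
  proof
    assume th: "t * h v \<le> 1"
    show "\<forall>z\<in>K. inner (t *\<^sub>R v) z \<le> 1"
    proof
      fix z assume z: "z \<in> K"
      have "inner v z \<le> h v"
      proof (cases "z = 0")
        case True then show ?thesis using hpos[OF v] by simp
      next
        case False
        define w where "w = z /\<^sub>R norm z"
        have w: "w \<in> S" using SnormI[OF False] w_def by simp
        have zw: "z = norm z *\<^sub>R w" using False w_def by simp
        have nz: "norm z \<le> Wf w" using radial[OF w, of "norm z"] z zw by simp
        have iz: "inner v z = norm z * inner v w" by (subst zw) simp
        show ?thesis
        proof (cases "inner v w \<ge> 0")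
          case True
          have "inner v z \<le> Wf w * inner v w" unfolding iz by (rule mult_right_mono[OF nz True])
          also have "\<dots> \<le> h v" unfolding h_def by (rule cSUP_upper[OF w hbdd[OF v]])
          finally show ?thesis .
        next
          case False
          then have "inner v z \<le> 0" unfolding iz by (simp add: mult_nonneg_nonpos)
          then show ?thesis using hpos[OF v] by simp
        qed
      qed
      then have "t * inner v z \<le> t * h v" using t by (rule mult_left_mono)
      then show "inner (t *\<^sub>R v) z \<le> 1" using th by simp
    qed
  next
    assume H: "\<forall>z\<in>K. inner (t *\<^sub>R v) z \<le> 1"
    show "t * h v \<le> 1"
    proof (cases "t = 0")
      case True then show ?thesis by simp
    next
      case False
      then have tp: "t > 0" using t by simp
      have "h v \<le> 1 / t" unfolding h_def
      proof (rule cSUP_least[OF Sne])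
        fix w assume w: "w \<in> S"
        have "inner (t *\<^sub>R v) (Wf w *\<^sub>R w) \<le> 1" using H WK[OF w] by blast
        then have "t * (Wf w * inner v w) \<le> 1" by (simp add: algebra_simps)
        then show "Wf w * inner v w \<le> 1 / t" using tp by (simp add: pos_le_divide_eq mult.commute)
      qed
      then show ?thesis using tp by (simp add: pos_le_divide_eq mult.commute)
    qed
  qed
  have IDv: "opI (opD F) v = 1 / h v" if v: "v \<in> S" for v
  proof -
    have "opW F w = Wf w" if "w \<in> S" for w
      unfolding opW_def Wf_def using hom_ext_unit[OF Snorm[OF that]] S_def by simp
    then have "opD F v = h v" unfolding opD_def opA_def h_def
      using hom_ext_unit[OF Snorm[OF v]] S_def by (auto intro!: SUP_cong)
    then show ?thesis unfolding opI_def using hom_ext_unit[OF Snorm[OF v]] by simp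
  qed
  have OK: "O_F = polar K"
  proof
    show "O_F \<subseteq> polar K"
    proof
      fix x assume "x \<in> O_F"
      then obtain v s where vs: "v \<in> S" "0 \<le> s" "s \<le> 1" "x = (s * opI (opD F) v) *\<^sub>R v"
        unfolding O_F_def Hypo_def S_def by auto
      have x: "x = (s / h v) *\<^sub>R v" using vs IDv by simp
      have "s / h v * h v \<le> 1" using hpos[OF vs(1)] vs by simp
      then show "x \<in> polar K" unfolding Pmem x using key[OF vs(1), of "s / h v"] hpos[OF vs(1)] vs by simp
    qed
    show "polar K \<subseteq> O_F"
    proof
      fix x assume x: "x \<in> polar K"
      show "x \<in> O_F"
      proof (cases "x = 0")
        case True
        obtain b where b: "b \<in> S" using Sne by blast
        show ?thesis unfolding O_F_def Hypo_def using True b S_def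
          by (intro CollectI exI[of _ b] exI[of _ 0]) auto
      next
        case False
        define v where "v = x /\<^sub>R norm x"
        have v: "v \<in> S" using SnormI[OF False] v_def by simp
        have xv: "x = norm x *\<^sub>R v" using False v_def by simp
        have "norm x * h v \<le> 1" using key[OF v, of "norm x"] x xv Pmem by auto
        moreover have "x = ((norm x * h v) * opI (opD F) v) *\<^sub>R v"
          using IDv[OF v] hpos[OF v] xv by simp
        ultimately show ?thesis unfolding O_F_def Hypo_def using v S_def hpos[OF v]
          by (intro CollectI exI[of _ v] exI[of _ "norm x * h v"]) auto
      qed
    qed
  qed
  have PKclosed: "closed (polar K)" unfolding polar_def
  proof -
    have "{z. \<forall>x\<in>K. inner z x \<le> 1} = (\<Inter>x\<in>K. {z. inner x z \<le> 1})" by (auto simp: inner_commute)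
    then show "closed {z. \<forall>x\<in>K. inner z x \<le> 1}" by (simp add: closed_INT closed_halfspace_le)
  qed
  have PKconvex: "convex (polar K)" unfolding polar_def
  proof -
    have "{z. \<forall>x\<in>K. inner z x \<le> 1} = (\<Inter>x\<in>K. {z. inner x z \<le> 1})" by (auto simp: inner_commute)
    then show "convex {z. \<forall>x\<in>K. inner z x \<le> 1}" by (simp add: convex_INT convex_halfspace_le)
  qed
  have PKbounded: "bounded (polar K)" unfolding bounded_iff
  proof (intro exI ballI)
    fix z assume z: "z \<in> polar K"
    show "norm z \<le> 1 / r"
    proof (cases "z = 0")
      case True then show ?thesis using r by simp
    next
      case False
      have "(r / norm z) *\<^sub>R z \<in> K" using Kr r by simp
      then have "inner z ((r / norm z) *\<^sub>R z) \<le> 1" using z Pmem by blast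
      then have "r * norm z \<le> 1" using False by (simp add: power2_norm_eq_inner[symmetric] power2_eq_square)
      then show ?thesis using r by (simp add: pos_le_divide_eq mult.commute)
    qed
  qed
  have PKint: "0 \<in> interior (polar K)"
  proof -
    have "ball 0 (1 / R) \<subseteq> polar K"
    proof
      fix y assume "y \<in> ball (0::'a) (1 / R)"
      then have y: "norm y < 1 / R" by simp
      show "y \<in> polar K" unfolding Pmem
      proof
        fix x assume "x \<in> K"
        have "inner y x \<le> norm y * norm x" using norm_cauchy_schwarz by blast
        also have "\<dots> \<le> (1 / R) * R"
          using y Kbound[OF \<open>x \<in> K\<close>] R r by (intro mult_mono) auto
        also have "\<dots> = 1" using R r by simp
        finally show "inner y x \<le> 1" .
      qed
    qed
    then show ?thesis using R r by (meson centre_in_ball divide_pos_pos interior_maximal open_ball zero_less_one order_less_le_trans interior_subset subsetD)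
  qed
  show ?thesis
    using OK bipolar[OF Kclosed Kconvex K0] PKclosed PKbounded PKconvex PKint
    unfolding K_def[symmetric] by (simp add: compact_eq_bounded_closed)
qed

end
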